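(* Let $t,\Delta\in\mathbb{N}$. If $A$ $(t,\Delta)$-approximates $B$ and $B$ $(t,\Delta)$-approximates $C$, then $A$ $(t,\Delta)$-approximates $C$.
   Context: $\mathbb{N}=\{0,1,2,\dots\}$, $[t]=\{0,1,\dots,t\}$. For $A\subseteq[t]$ and $b\in\mathbb{N}$ define $\mathrm{apx}^-_t(b,A)=\max\{a\in A\cup\{t+1\}: a\le b\}$ and $\mathrm{apx}^+_t(b,A)=\min\{a\in A\cup\{t+1\}: a\ge b\}$, with $\max\emptyset=-\infty$, $\min\emptyset=\infty$. For $A,B\subseteq\mathbb{N}$, $A$ $(t,\Delta)$-approximates $B$ if $A\subseteq B\subseteq[t]$ and for every $b\in B$, $\mathrm{apx}^+_t(b,A)-\mathrm{apx}^-_t(b,A)\le\Delta$. *)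

theory Defs
  imports "HOL-Library.Extended_Real"
begin

text \<open>[t] = {0..t}. Values of apx are taken in the extended reals so that
  max of the empty set is -\<infinity> and min of the empty set is \<infinity>.\<close>

definition apx_minus :: "nat \<Rightarrow> nat \<Rightarrow> nat set \<Rightarrow> ereal" where
  "apx_minus t b A = Sup ((\<lambda>a. ereal (real a)) ` {a \<in> A \<union> {t+1}. a \<le> b})"

definition apx_plus :: "nat \<Rightarrow> nat \<Rightarrow> nat set \<Rightarrow> ereal" where
  "apx_plus t b A = Inf ((\<lambda>a. ereal (real a)) ` {a \<in> A \<union> {t+1}. b \<le> a})"

definition approximates :: "nat \<Rightarrow> nat \<Rightarrow> nat set \<Rightarrow> nat set \<Rightarrow> bool" where
  "approximates t \<Delta> A B \<longleftrightarrow> A \<subseteq> B \<and> B \<subseteq> {0..t} \<and>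
     (\<forall>b\<in>B. apx_plus t b A - apx_minus t b A \<le> ereal (real \<Delta>))"

end

theory Submission
  imports Defs
begin

lemma Sup_img_Max:
  fixes S :: "nat set"
  assumes "finite S" "S \<noteq> {}"
  shows "Sup ((\<lambda>a. ereal (real a)) ` S) = ereal (real (Max S))"
proof (rule antisym)
  show "Sup ((\<lambda>a. ereal (real a)) ` S) \<le> ereal (real (Max S))"
    using assms by (auto intro!: Sup_least)
  show "ereal (real (Max S)) \<le> Sup ((\<lambda>a. ereal (real a)) ` S)"
    using assms by (intro Sup_upper imageI Max_in)
qed

lemma Inf_img_Min:
  fixes S :: "nat set"
  assumes "finite S" "S \<noteq> {}"
  shows "Inf ((\<lambda>a. ereal (real a)) ` S) = ereal (real (Min S))"
proof (rule antisym)
  show "ereal (real (Min S)) \<le> Inf ((\<lambda>a. ereal (real a)) ` S)"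
    using assms by (auto intro!: Inf_greatest)
  show "Inf ((\<lambda>a. ereal (real a)) ` S) \<le> ereal (real (Min S))"
    using assms by (intro Inf_lower imageI Min_in)
qed

lemma apx_iff:
  assumes "b \<le> t + 1" and At: "A \<subseteq> {0..t}"
  shows "apx_plus t b A - apx_minus t b A \<le> ereal (real \<Delta>) \<longleftrightarrow>
    (\<exists>l u. l \<in> A \<union> {t+1} \<and> u \<in> A \<union> {t+1} \<and> l \<le> b \<and> b \<le> u \<and> u \<le> l + \<Delta>)"
proof -
  define Sm where "Sm = {a \<in> A \<union> {t+1}. a \<le> b}"
  define Sp where "Sp = {a \<in> A \<union> {t+1}. b \<le> a}"
  have fm: "finite Sm" unfolding Sm_def by (rule finite_subset[of _ "{..b}"]) auto
  have fp: "finite Sp" unfolding Sp_def by (rule finite_subset[of _ "{..t+1}"]) (use At in auto)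
  have np: "Sp \<noteq> {}" using assms unfolding Sp_def by auto
  have P: "apx_plus t b A = ereal (real (Min Sp))"
    unfolding apx_plus_def Sp_def[symmetric] using Inf_img_Min[OF fp np] .
  show ?thesis
  proof (cases "Sm = {}")
    case True
    hence "apx_minus t b A = -\<infinity>" unfolding apx_minus_def Sm_def[symmetric] by (simp add: bot_ereal_def)
    moreover have "\<not> (\<exists>l. l \<in> A \<union> {t+1} \<and> l \<le> b)" using True unfolding Sm_def by auto
    ultimately show ?thesis using P by auto
  next
    case False
    have M: "apx_minus t b A = ereal (real (Max Sm))"
      unfolding apx_minus_def Sm_def[symmetric] using Sup_img_Max[OF fm False] .
    have MS: "Max Sm \<in> Sm" using Max_in[OF fm False] .
    have mS: "Min Sp \<in> Sp" using Min_in[OF fp np] .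
    show ?thesis
    proof
      assume "apx_plus t b A - apx_minus t b A \<le> ereal (real \<Delta>)"
      hence "Min Sp \<le> Max Sm + \<Delta>" using P M by simp
      thus "\<exists>l u. l \<in> A \<union> {t+1} \<and> u \<in> A \<union> {t+1} \<and> l \<le> b \<and> b \<le> u \<and> u \<le> l + \<Delta>"
        using MS mS unfolding Sm_def Sp_def by blast
    next
      assume "\<exists>l u. l \<in> A \<union> {t+1} \<and> u \<in> A \<union> {t+1} \<and> l \<le> b \<and> b \<le> u \<and> u \<le> l + \<Delta>"
      then obtain l u where h: "l \<in> A \<union> {t+1}" "u \<in> A \<union> {t+1}" "l \<le> b" "b \<le> u" "u \<le> l + \<Delta>"
        by blast
      have "l \<le> Max Sm" using h fm unfolding Sm_def by (auto intro!: Max_ge)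
      moreover have "Min Sp \<le> u" using h fp unfolding Sp_def by (auto intro!: Min_le)
      ultimately have "Min Sp \<le> Max Sm + \<Delta>" using h by linarith
      thus "apx_plus t b A - apx_minus t b A \<le> ereal (real \<Delta>)" using P M by simp
    qed
  qed
qed

theorem lemma4p2:
  fixes t \<Delta> :: nat and A B C :: "nat set"
  assumes "approximates t \<Delta> A B" and "approximates t \<Delta> B C"
  shows "approximates t \<Delta> A C"
proof -
  have AB: "A \<subseteq> B" "B \<subseteq> {0..t}" and
    hAB: "\<And>b. b \<in> B \<Longrightarrow> \<exists>l u. l \<in> A \<union> {t+1} \<and> u \<in> A \<union> {t+1} \<and> l \<le> b \<and> b \<le> u \<and> u \<le> l + \<Delta>"
  proof -
    show "A \<subseteq> B" "B \<subseteq> {0..t}" using assms(1) unfolding approximates_def by auto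
    fix b assume b: "b \<in> B"
    have "b \<le> t + 1" "A \<subseteq> {0..t}" using b assms(1) unfolding approximates_def by auto
    thus "\<exists>l u. l \<in> A \<union> {t+1} \<and> u \<in> A \<union> {t+1} \<and> l \<le> b \<and> b \<le> u \<and> u \<le> l + \<Delta>"
      using apx_iff[of b t A \<Delta>] b assms(1) unfolding approximates_def by blast
  qed
  have BC: "B \<subseteq> C" "C \<subseteq> {0..t}" and
    hBC: "\<And>c. c \<in> C \<Longrightarrow> \<exists>l u. l \<in> B \<union> {t+1} \<and> u \<in> B \<union> {t+1} \<and> l \<le> c \<and> c \<le> u \<and> u \<le> l + \<Delta>"
  proof -
    show "B \<subseteq> C" "C \<subseteq> {0..t}" using assms(2) unfolding approximates_def by auto
    fix b assume b: "b \<in> C"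
    have "b \<le> t + 1" "B \<subseteq> {0..t}" using b assms(2) unfolding approximates_def by auto
    thus "\<exists>l u. l \<in> B \<union> {t+1} \<and> u \<in> B \<union> {t+1} \<and> l \<le> b \<and> b \<le> u \<and> u \<le> l + \<Delta>"
      using apx_iff[of b t B \<Delta>] b assms(2) unfolding approximates_def by blast
  qed
  have main: "\<exists>l u. l \<in> A \<union> {t+1} \<and> u \<in> A \<union> {t+1} \<and> l \<le> c \<and> c \<le> u \<and> u \<le> l + \<Delta>"
    if c: "c \<in> C" for c
  proof -
    define Sm where "Sm = {a \<in> B \<union> {t+1}. a \<le> c}"
    define Sp where "Sp = {a \<in> B \<union> {t+1}. c \<le> a}"
    have fm: "finite Sm" unfolding Sm_def by (rule finite_subset[of _ "{..c}"]) auto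
    have fp: "finite Sp" unfolding Sp_def by (rule finite_subset[of _ "{..t+1}"]) (use BC in auto)
    obtain l0 u0 where h0: "l0 \<in> B \<union> {t+1}" "u0 \<in> B \<union> {t+1}" "l0 \<le> c" "c \<le> u0" "u0 \<le> l0 + \<Delta>"
      using hBC[OF c] by blast
    have nm: "Sm \<noteq> {}" using h0 unfolding Sm_def by auto
    have np: "Sp \<noteq> {}" using h0 unfolding Sp_def by auto
    define l where "l = Max Sm"
    define u where "u = Min Sp"
    have lS: "l \<in> Sm" unfolding l_def using Max_in[OF fm nm] .
    have uS: "u \<in> Sp" unfolding u_def using Min_in[OF fp np] .
    have lmax: "\<And>x. x \<in> B \<union> {t+1} \<Longrightarrow> x \<le> c \<Longrightarrow> x \<le> l"
      unfolding l_def using fm Sm_def by auto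
    have umin: "\<And>x. x \<in> B \<union> {t+1} \<Longrightarrow> c \<le> x \<Longrightarrow> u \<le> x"
      unfolding u_def using fp Sp_def by auto
    have "l0 \<le> l" using lmax h0 by auto
    moreover have "u \<le> u0" using umin h0 by auto
    ultimately have gap: "u \<le> l + \<Delta>" using h0 by linarith
    have lc: "l \<le> c" and lB: "l \<in> B \<union> {t+1}" using lS unfolding Sm_def by auto
    have cu: "c \<le> u" and uB: "u \<in> B \<union> {t+1}" using uS unfolding Sp_def by auto
    have ct: "c \<le> t" using c BC by auto
    show ?thesis
    proof (cases "l \<in> A \<union> {t+1}")
      case lA: False
      hence "l \<in> B" using lB by auto
      then obtain l' u' where h: "l' \<in> A \<union> {t+1}" "u' \<in> A \<union> {t+1}" "l' \<le> l" "l \<le> u'" "u' \<le> l' + \<Delta>"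
        using hAB by blast
      have "u' \<noteq> l" using lA h by auto
      hence "l < u'" using h by auto
      moreover have "u' \<in> B \<union> {t+1}" using h AB by auto
      ultimately have "c \<le> u'" using lmax by (meson leI less_le_not_le)
      thus ?thesis using h lc by (meson order_trans)
    next
      case lA: True
      show ?thesis
      proof (cases "u \<in> A \<union> {t+1}")
        case True
        thus ?thesis using lA gap lc cu by blast
      next
        case uA: False
        hence "u \<in> B" using uB by auto
        then obtain l' u' where h: "l' \<in> A \<union> {t+1}" "u' \<in> A \<union> {t+1}" "l' \<le> u" "u \<le> u'" "u' \<le> l' + \<Delta>"
          using hAB by blast
        have "l' \<noteq> u" using uA h by auto
        hence "l' < u" using h by auto
        moreover have "l' \<in> B \<union> {t+1}" using h AB by auto
        ultimately have "l' \<le> c" using umin by (meson leI less_le_not_le)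
        thus ?thesis using h cu by (meson order_trans)
      qed
    qed
  qed
  show ?thesis unfolding approximates_def
  proof (intro conjI ballI)
    show "A \<subseteq> C" using AB BC by auto
    show "C \<subseteq> {0..t}" using BC by auto
    fix c assume c: "c \<in> C"
    hence "c \<le> t + 1" using BC by auto
    thus "apx_plus t c A - apx_minus t c A \<le> ereal (real \<Delta>)"
      using apx_iff[of c t A \<Delta>] main[OF c] AB BC by blast
  qed
qed

end
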